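(* Assume the following hypothesis: for every $\varepsilon>0$ there is a constant $c_\varepsilon>0$ such that for all sufficiently large real $x$, $$\Psi(x+x^{\varepsilon},x^{\varepsilon})-\Psi(x,x^{\varepsilon})\ge c_\varepsilon x^{\varepsilon}.$$ Then for every $\varepsilon>0$ we have $g(n)<n^{\varepsilon}$ for all sufficiently large integers $n$.
   Context: For real $x,y$, $\Psi(x,y)$ denotes the number of positive integers $\le x$ all of whose prime factors are $\le y$. For integers $n>1$ and $k\ge 1$, say that $(n,k)$ has a prime representation if there are distinct primes $P_1,\dots,P_k$ with $P_j\mid (n+j)$ for $1\le j\le k$. Define $g(n)$ to be the largest positive integer $k$ such that $(n,k)$ has a prime representation. *)

theory Defs
  imports "HOL-Analysis.Analysis" "HOL-Computational_Algebra.Primes"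
begin

definition Psi :: "real \<Rightarrow> real \<Rightarrow> nat" where
  "Psi x y = card {m::nat. 1 \<le> m \<and> real m \<le> x \<and>
                    (\<forall>p. prime p \<and> p dvd m \<longrightarrow> real p \<le> y)}"

definition prime_rep :: "nat \<Rightarrow> nat \<Rightarrow> bool" where
  "prime_rep n k \<longleftrightarrow> (\<exists>P :: nat \<Rightarrow> nat. inj_on P {1..k} \<and>
      (\<forall>j\<in>{1..k}. prime (P j) \<and> P j dvd (n + j)))"

definition g :: "nat \<Rightarrow> nat" where
  "g n = (GREATEST k. k \<ge> 1 \<and> prime_rep n k)"

end

theory Submission
  imports Defs
begin

definition smooth :: "real \<Rightarrow> nat \<Rightarrow> bool" where
  "smooth y m \<longleftrightarrow> (\<forall>p. prime p \<and> p dvd m \<longrightarrow> real p \<le> y)"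

definition Blk :: "real \<Rightarrow> real \<Rightarrow> nat set" where
  "Blk d x = {m::nat. 1 \<le> m \<and> x < real m \<and> real m \<le> x + x powr d \<and> smooth (x powr d) m}"

lemma fin_le: "finite {m::nat. real m \<le> z \<and> Q m}"
proof -
  have "{m::nat. real m \<le> z \<and> Q m} \<subseteq> {..nat \<lceil>z\<rceil>}"
  proof
    fix m assume "m \<in> {m::nat. real m \<le> z \<and> Q m}"
    then have "real m \<le> z" by simp
    then have "real m \<le> of_int \<lceil>z\<rceil>" using le_of_int_ceiling order_trans by blast
    then have "int m \<le> \<lceil>z\<rceil>" by linarith
    then show "m \<in> {..nat \<lceil>z\<rceil>}" by simp
  qed
  then show ?thesis by (rule finite_subset) auto
qed

lemma Psi_diff:
  assumes "h \<ge> 0"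
  shows "real (Psi (x+h) y) - real (Psi x y) =
    real (card {m::nat. 1 \<le> m \<and> x < real m \<and> real m \<le> x + h \<and> smooth y m})"
proof -
  define A1 where "A1 = {m::nat. 1 \<le> m \<and> real m \<le> x \<and> (\<forall>p. prime p \<and> p dvd m \<longrightarrow> real p \<le> y)}"
  define A2 where "A2 = {m::nat. 1 \<le> m \<and> real m \<le> x + h \<and> (\<forall>p. prime p \<and> p dvd m \<longrightarrow> real p \<le> y)}"
  define B where "B = {m::nat. 1 \<le> m \<and> x < real m \<and> real m \<le> x + h \<and> smooth y m}"
  have f1: "finite A1" unfolding A1_def using fin_le[of x "\<lambda>m. 1 \<le> m \<and> (\<forall>p. prime p \<and> p dvd m \<longrightarrow> real p \<le> y)"]
    by (simp add: conj_commute conj_left_commute)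
  have fB: "finite B" unfolding B_def using fin_le[of "x+h" "\<lambda>m. 1 \<le> m \<and> x < real m \<and> smooth y m"]
    by (simp add: conj_commute conj_left_commute)
  have "A2 = A1 \<union> B" using assms unfolding A1_def A2_def B_def smooth_def by auto
  moreover have "A1 \<inter> B = {}" unfolding A1_def B_def by auto
  ultimately have "card A2 = card A1 + card B" using f1 fB by (simp add: card_Un_disjoint)
  then show ?thesis unfolding Psi_def A1_def[symmetric] A2_def[symmetric] B_def[symmetric] by simp
qed

lemma prime_rep_mono: "prime_rep n k \<Longrightarrow> k' \<le> k \<Longrightarrow> prime_rep n k'"
proof -
  assume a: "prime_rep n k" and l: "k' \<le> k"
  then obtain P where "inj_on P {1..k}" "\<forall>j\<in>{1..k}. prime (P j) \<and> P j dvd (n + j)"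
    unfolding prime_rep_def by blast
  moreover have "{1..k'} \<subseteq> {1..k}" using l by auto
  ultimately show ?thesis unfolding prime_rep_def using inj_on_subset by blast
qed

lemma prime_rep_1: "n \<ge> 1 \<Longrightarrow> prime_rep n 1"
proof -
  assume "n \<ge> 1"
  then obtain p :: nat where "prime p" "p dvd n + 1" using prime_factor_nat[of "n+1"] by auto
  then show ?thesis unfolding prime_rep_def by (intro exI[of _ "\<lambda>_. p"]) auto
qed

lemma g_lt: assumes "n \<ge> 1" "\<not> prime_rep n K" shows "g n < K"
proof -
  have b: "\<And>y. y \<ge> 1 \<and> prime_rep n y \<Longrightarrow> y \<le> K"
    using assms(2) prime_rep_mono by (meson nat_le_linear)
  have "g n \<ge> 1 \<and> prime_rep n (g n)" unfolding g_def
    by (rule GreatestI_nat[of _ 1 K]) (use prime_rep_1 assms(1) b in auto)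
  then show ?thesis using assms(2) prime_rep_mono by (meson not_le_imp_less nat_le_linear)
qed

lemma card_bound:
  assumes "prime_rep n K" "T \<subseteq> {n+1..n+K}" "\<forall>m\<in>T. smooth y m"
  shows "card T \<le> nat \<lfloor>y\<rfloor> + 1"
proof -
  obtain P where inj: "inj_on P {1..K}" and P: "\<forall>j\<in>{1..K}. prime (P j) \<and> P j dvd (n + j)"
    using assms(1) unfolding prime_rep_def by blast
  have "inj_on (\<lambda>m. P (m - n)) T"
  proof (rule inj_onI)
    fix u v assume u: "u \<in> T" and v: "v \<in> T" and e: "P (u - n) = P (v - n)"
    have "u \<in> {n+1..n+K}" "v \<in> {n+1..n+K}" using u v assms(2) by blast+
    then have "u - n \<in> {1..K}" "v - n \<in> {1..K}" by auto
    then have "u - n = v - n" using inj e by (meson inj_onD)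
    then show "u = v" using \<open>u \<in> {n+1..n+K}\<close> \<open>v \<in> {n+1..n+K}\<close> by auto
  qed
  moreover have "(\<lambda>m. P (m - n)) ` T \<subseteq> {..nat \<lfloor>y\<rfloor>}"
  proof
    fix q assume "q \<in> (\<lambda>m. P (m - n)) ` T"
    then obtain m where m: "m \<in> T" "q = P (m - n)" by auto
    have mm: "m \<in> {n+1..n+K}" using m assms(2) by blast
    have j: "m - n \<in> {1..K}" using mm by auto
    have "n + (m - n) = m" using mm by auto
    moreover have "prime (P (m-n)) \<and> P (m-n) dvd (n + (m - n))" using P j by blast
    ultimately have "prime q" "q dvd m" using m(2) by auto
    then have "real q \<le> y" using assms(3) m unfolding smooth_def by auto
    then show "q \<in> {..nat \<lfloor>y\<rfloor>}" by (simp add: le_nat_floor)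
  qed
  ultimately have "card T \<le> card {..nat \<lfloor>y\<rfloor>}" by (intro card_inj_on_le) auto
  then show ?thesis by simp
qed


lemma core:
  fixes n::nat and e c :: real
  assumes e: "0<e" "e \<le> 1" and c: "c > 0" and n: "n \<ge> 1"
  and H: "\<forall>x\<ge>real n. real (card (Blk (e/2) x)) \<ge> c * x powr (e/2)"
  and big: "c * (real n powr (e/2) / 3 - 2) > 3"
  shows "real (g n) < real n powr e"
proof -
  define d where "d = e/2"
  have d: "0 < d" "d \<le> 1/2" using e by (auto simp: d_def)
  define a where "a = real n powr d"
  have a1: "a \<ge> 1" unfolding a_def using n d by (simp add: ge_one_powr_ge_zero)
  have aa: "a*a = real n powr e" unfolding a_def d_def by (simp add: powr_add[symmetric])
  define K where "K = nat \<lfloor>real n powr e\<rfloor>"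
  have K0: "real K = of_int \<lfloor>real n powr e\<rfloor>" unfolding K_def by simp
  have K1: "real K \<le> a*a" using K0 aa by (simp add: of_int_floor_le)
  have K2: "real K > a*a - 1" using K0 aa by (metis real_of_int_floor_gt_diff_one)
  have "real n powr e \<le> real n powr 1" using n e by (intro powr_mono) auto
  then have Kn: "K \<le> n" using K1 aa n by simp
  define L where "L = nat \<lceil>2*a\<rceil>"
  have L0: "real L = of_int \<lceil>2*a\<rceil>" unfolding L_def using a1 by simp
  have L1: "2*a \<le> real L" using L0 by simp
  have L2: "real L \<le> 2*a + 1" using L0 by (metis of_int_ceiling_le_add_one)
  have L3: "real L \<le> 3*a" using L2 a1 by linarith
  have Lpos: "L \<ge> 1" using L1 a1 by simp
  define M where "M = K div L"
  have hML: "M * L \<le> K" using div_mult_mod_eq[of K L] unfolding M_def by linarith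
  have "K mod L < L" using Lpos by simp
  moreover have "K = M*L + K mod L" unfolding M_def by simp
  moreover have "(M+1)*L = M*L + L" by simp
  ultimately have "K < (M+1)*L" by linarith
  then have "real K < real ((M+1)*L)" by (simp only: of_nat_less_iff)
  then have "real K < (real M + 1) * real L" by (simp add: algebra_simps)
  also have "\<dots> \<le> (real M + 1) * (3*a)" using L3 by (intro mult_left_mono) auto
  finally have MK: "(real M + 1) * (3*a) > a*a - 1" using K2 by linarith
  have Mbig: "real M \<ge> a/3 - 2"
  proof (rule ccontr)
    assume "\<not> ?thesis"
    then have "real M + 1 < a/3 - 1" by linarith
    then have "(real M + 1) * (3*a) < (a/3 - 1) * (3*a)" using a1 by (intro mult_strict_right_mono) auto
    also have "\<dots> = a*a - 3*a" by (simp add: algebra_simps)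
    finally show False using MK a1 by linarith
  qed
  define x where "x i = real (n + i*L)" for i
  define B where "B i = Blk d (x i)" for i
  have x_facts: "real n \<le> x i \<and> x i \<le> 2 * real n \<and> (i+1)*L \<le> K" if "i < M" for i
  proof -
    have "(i+1)*L \<le> M*L" using that by (intro mult_le_mono1) auto
    then have "i*L \<le> n" "(i+1)*L \<le> K" using hML Kn by auto
    then have "real (i*L) \<le> real n" by (simp only: of_nat_le_iff)
    then show ?thesis using \<open>(i+1)*L \<le> K\<close> unfolding x_def by simp
  qed
  have xd: "x i powr d \<le> 2*a \<and> a \<le> x i powr d" if "i < M" for i
  proof -
    have h: "real n \<le> x i" "x i \<le> 2 * real n" using x_facts[OF that] by auto
    have "x i powr d \<le> (2 * real n) powr d" using h d by (intro powr_mono2) auto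
    also have "\<dots> = 2 powr d * a" unfolding a_def by (simp add: powr_mult)
    also have "2 powr d \<le> 2 powr (1::real)" using d by (intro powr_mono) auto
    then have "2 powr d * a \<le> 2 * a" using a1 by (intro mult_right_mono) auto
    finally have 1: "x i powr d \<le> 2*a" .
    have "a \<le> x i powr d" unfolding a_def using h d by (intro powr_mono2) auto
    with 1 show ?thesis by simp
  qed
  have Bsub: "B i \<subseteq> {n + i*L + 1 .. n + i*L + L}" if "i < M" for i
  proof
    fix m assume m: "m \<in> B i"
    then have m1: "x i < real m" and m2: "real m \<le> x i + x i powr d"
      unfolding B_def Blk_def by auto
    have "real m \<le> real (n + i*L + L)" using m2 xd[OF that] L1 unfolding x_def by simp
    then have "m \<le> n + i*L + L" by (simp only: of_nat_le_iff)
    moreover have "n + i*L < m" using m1 unfolding x_def by (simp only: of_nat_less_iff)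
    ultimately show "m \<in> {n + i*L + 1 .. n + i*L + L}" by auto
  qed
  have Bsm: "smooth (2*a) m" if "i < M" "m \<in> B i" for i m
  proof -
    have "smooth (x i powr d) m" using that(2) unfolding B_def Blk_def by auto
    moreover have "x i powr d \<le> 2*a" using xd[OF that(1)] by simp
    ultimately show ?thesis unfolding smooth_def by (meson order_trans)
  qed
  have Bfin: "finite (B i)" if "i < M" for i using Bsub[OF that] by (rule finite_subset) auto
  have Bdisj: "B i \<inter> B j = {}" if "i < M" "j < M" "i \<noteq> j" for i j
  proof (rule ccontr)
    assume "B i \<inter> B j \<noteq> {}"
    then obtain m where "m \<in> B i" "m \<in> B j" by blast
    then have "n + i*L < m" "m \<le> n + i*L + L" "n + j*L < m" "m \<le> n + j*L + L"
      using Bsub[OF that(1)] Bsub[OF that(2)] by auto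
    then have "i*L < (j+1)*L" "j*L < (i+1)*L" by (auto simp: algebra_simps)
    then have "i < j+1" "j < i+1" by (simp_all only: mult_less_cancel2)
    then show False using that(3) by simp
  qed
  define T where "T = (\<Union>i\<in>{..<M}. B i)"
  have Tsub: "T \<subseteq> {n+1..n+K}"
  proof
    fix m assume "m \<in> T"
    then obtain i where i: "i < M" "m \<in> B i" unfolding T_def by auto
    then show "m \<in> {n+1..n+K}" using Bsub[OF i(1)] x_facts[OF i(1)] by (auto simp: algebra_simps)
  qed
  have Tsm: "\<forall>m\<in>T. smooth (2*a) m" unfolding T_def using Bsm by auto
  have "card T = (\<Sum>i<M. card (B i))" unfolding T_def
    by (rule card_UN_disjoint) (use Bfin Bdisj in auto)
  then have "real (card T) = (\<Sum>i<M. real (card (B i)))" by simp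
  also have "\<dots> \<ge> (\<Sum>i<M. c * a)"
  proof (rule sum_mono)
    fix i assume "i \<in> {..<M}"
    then have i: "i < M" by simp
    have "real (card (B i)) \<ge> c * x i powr d" using H x_facts[OF i] unfolding B_def d_def by auto
    moreover have "c * a \<le> c * x i powr d" using xd[OF i] c by (intro mult_left_mono) auto
    ultimately show "c * a \<le> real (card (B i))" by linarith
  qed
  finally have cT: "real (card T) \<ge> real M * (c * a)" by simp
  have "real M * (c*a) \<ge> (a/3 - 2) * (c*a)" using Mbig c a1 by (intro mult_right_mono) auto
  moreover have "(a/3 - 2) * (c*a) = (c * (a/3 - 2)) * a" by (simp add: algebra_simps)
  moreover have "(c * (a/3 - 2)) * a > 3 * a"
  proof (rule mult_strict_right_mono)
    show "3 < c * (a/3 - 2)" using big unfolding a_def d_def by simp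
    show "0 < a" using a1 by simp
  qed
  ultimately have cT2: "real (card T) > 2*a + 1" using cT a1 by linarith
  have np: "\<not> prime_rep n K"
  proof
    assume "prime_rep n K"
    then have "card T \<le> nat \<lfloor>2*a\<rfloor> + 1" using card_bound Tsub Tsm by blast
    then have "real (card T) \<le> real (nat \<lfloor>2*a\<rfloor>) + 1" by linarith
    moreover have "real (nat \<lfloor>2*a\<rfloor>) \<le> 2*a" using a1 by simp
    ultimately show False using cT2 by linarith
  qed
  have "g n < K" using g_lt[OF n np] .
  then have "real (g n) < real K" by simp
  then show ?thesis using K1 aa by linarith
qed


lemma pow_lim: assumes d: "(d::real) > 0" shows "filterlim (\<lambda>n::nat. real n powr d) at_top at_top"
  unfolding filterlim_at_top
proof
  fix Z :: real
  define Z' where "Z' = max Z 1"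
  define N where "N = nat \<lceil>Z' powr (1/d)\<rceil>"
  show "\<forall>\<^sub>F n in sequentially. Z \<le> real n powr d"
    using eventually_ge_at_top[of N]
  proof eventually_elim
    case (elim n)
    have "Z' powr (1/d) \<le> real N" unfolding N_def by linarith
    also have "\<dots> \<le> real n" using elim by simp
    finally have "(Z' powr (1/d)) powr d \<le> real n powr d" using d by (intro powr_mono2) auto
    moreover have "(Z' powr (1/d)) powr d = Z'" using d by (simp add: powr_powr Z'_def)
    ultimately show ?case unfolding Z'_def by linarith
  qed
qed

theorem theorem1p2:
  assumes hyp: "\<And>\<epsilon>::real. \<epsilon> > 0 \<Longrightarrow> \<exists>c>0. \<forall>\<^sub>F x in at_top.
      real (Psi (x + x powr \<epsilon>) (x powr \<epsilon>)) - real (Psi x (x powr \<epsilon>)) \<ge> c * x powr \<epsilon>"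
  shows "\<And>\<epsilon>::real. \<epsilon> > 0 \<Longrightarrow> \<forall>\<^sub>F n in sequentially. real (g n) < real n powr \<epsilon>"
proof -
  fix \<epsilon> :: real assume \<epsilon>: "\<epsilon> > 0"
  define e where "e = min \<epsilon> 1"
  have e: "0 < e" "e \<le> 1" "e \<le> \<epsilon>" using \<epsilon> by (auto simp: e_def)
  obtain c where c: "c > 0" and ev: "\<forall>\<^sub>F x in at_top.
      real (Psi (x + x powr (e/2)) (x powr (e/2))) - real (Psi x (x powr (e/2))) \<ge> c * x powr (e/2)"
    using hyp[of "e/2"] e by auto
  obtain X0 where X0: "\<And>x. x \<ge> X0 \<Longrightarrow>
      real (Psi (x + x powr (e/2)) (x powr (e/2))) - real (Psi x (x powr (e/2))) \<ge> c * x powr (e/2)"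
    using ev unfolding eventually_at_top_linorder by blast
  have ev2: "\<forall>\<^sub>F n in sequentially. real n powr (e/2) > 3*(3/c+2)"
    using pow_lim[of "e/2"] e unfolding filterlim_at_top_dense by auto
  have ev3: "\<forall>\<^sub>F n in sequentially. n \<ge> nat \<lceil>X0\<rceil> + 1"
    by (rule eventually_ge_at_top)
  show "\<forall>\<^sub>F n in sequentially. real (g n) < real n powr \<epsilon>"
    using ev2 ev3
  proof eventually_elim
    case (elim n)
    have n1: "n \<ge> 1" using elim(2) by simp
    have nX: "real n \<ge> X0" using elim(2) by linarith
    have H: "\<forall>x\<ge>real n. real (card (Blk (e/2) x)) \<ge> c * x powr (e/2)"
    proof (intro allI impI)
      fix x assume "x \<ge> real n"
      then have "x \<ge> X0" using nX by linarith
      from X0[OF this] Psi_diff[of "x powr (e/2)" x "x powr (e/2)"]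
      show "real (card (Blk (e/2) x)) \<ge> c * x powr (e/2)" unfolding Blk_def by simp
    qed
    have "real n powr (e/2) / 3 - 2 > 3 / c" using elim(1) by (simp add: field_simps)
    then have "c * (real n powr (e/2) / 3 - 2) > c * (3/c)" using c by (intro mult_strict_left_mono) auto
    then have big: "c * (real n powr (e/2) / 3 - 2) > 3" using c by simp
    have "real (g n) < real n powr e" using core[OF e(1) e(2) c n1 H big] .
    also have "\<dots> \<le> real n powr \<epsilon>" using n1 e by (intro powr_mono) auto
    finally show ?case .
  qed
qed

end
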